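(* Assume proportional damping $D=\alpha M+\beta K$ with $\alpha,\beta\ge0$. Let $\nu_p,\nu_q\ge1$, let $\zeta_1,\dots,\zeta_{\nu_p}>0$ and $\omega_1,\dots,\omega_{\nu_q}>0$ be such that $G(\pm i\zeta_j)$, $G(\pm i\omega_k)$ exist, and let $\rho_j,\varphi_k$ be real weights. Form $\widetilde{\mathbb M},\widetilde{\mathbb K}\in\mathbb{C}^{2\nu_q\times 2\nu_p}$, $\widetilde{\mathbb B}\in\mathbb{C}^{2\nu_q}$, $\widetilde{\mathbb C}\in\mathbb{C}^{1\times2\nu_p}$ using the ordered node lists $(\zeta_1,-\zeta_1,\zeta_2,-\zeta_2,\dots,\zeta_{\nu_p},-\zeta_{\nu_p})$ with weights $(\rho_1,\rho_1,\dots,\rho_{\nu_p},\rho_{\nu_p})$ and $(\omega_1,-\omega_1,\dots,\omega_{\nu_q},-\omega_{\nu_q})$ with weights $(\varphi_1,\varphi_1,\dots,\varphi_{\nu_q},\varphi_{\nu_q})$. For $1\le k\le\nu_q$, $1\le j\le\nu_p$, let $\widetilde{\mathbb M}^{(2)}_{k,j},\widetilde{\mathbb K}^{(2)}_{k,j}\in\mathbb{C}^{2\times2}$ be the submatrices in rows $2k-1,2k$ and columns $2j-1,2j$, $\widetilde{\mathbb B}^{(2)}_k$ the entries $2k-1,2k$ of $\widetilde{\mathbb B}$, $\widetilde{\mathbb C}^{(2)}_j$ the entries $2j-1,2j$ of $\widetilde{\mathbb C}$, and define $$\widetilde{\mathbb M}^{\mathrm R}_{k,j}=\mathcal F_2\widetilde{\mathbb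 M}^{(2)}_{k,j}\mathcal F_1^{\mathrm H},\quad \widetilde{\mathbb K}^{\mathrm R}_{k,j}=\mathcal F_2\widetilde{\mathbb K}^{(2)}_{k,j}\mathcal F_1^{\mathrm H},\quad \widetilde{\mathbb B}^{\mathrm R}_k=\mathcal F_2\widetilde{\mathbb B}^{(2)}_k,\quad \widetilde{\mathbb C}^{\mathrm R}_j=\widetilde{\mathbb C}^{(2)}_j\mathcal F_1^{\mathrm H}.$$ Then: (i) $\widetilde{\mathbb M}^{\mathrm R}_{k,j}$ and $\widetilde{\mathbb K}^{\mathrm R}_{k,j}$ are real $2\times2$ matrices, and $$\widetilde{\mathbb B}^{\mathrm R}_k=\sqrt2\,\varphi_k\begin{bmatrix}\mathrm{Re}\,H(i\omega_k)\\-\mathrm{Im}\,H(i\omega_k)\end{bmatrix},\qquad \widetilde{\mathbb C}^{\mathrm R}_j=\sqrt2\,\rho_j\zeta_j\big[\mathrm{Re}\,H(i\zeta_j)\ \ \mathrm{Im}\,H(i\zeta_j)\big];$$ (ii) with $\Omega_{k,2}=\omega_k^2I_2$, $\Omega_{k,1}=\begin{bmatrix}0&\omega_k\\-\omega_k&0\end{bmatrix}$, $\Theta_{j,2}=\zeta_j^2I_2$, $\Theta_{j,1}=\begin{bmatrix}0&\zeta_j\\-\zeta_j&0\end{bmatrix}$, $$H_{\zeta,kj}=2\varphi_k\rho_j\zeta_j\begin{bmatrix}\mathrm{Re}\,H(i\zeta_j)&\mathrm{Im}\,H(i\zeta_j)\\0&0\end{bmatrix},\qquad H_{\omega,kj}=2\varphi_k\rho_j\zeta_j\begin{bmatrix}\mathrm{Re}\,H(i\omega_k)&0\\-\mathrm{Im}\,H(i\omega_k)&0\end{bmatrix},$$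 the following hold: $$-\Omega_{k,2}\widetilde{\mathbb M}^{\mathrm R}_{k,j}+\Omega_{k,1}\big(\alpha\widetilde{\mathbb M}^{\mathrm R}_{k,j}+\beta\widetilde{\mathbb K}^{\mathrm R}_{k,j}\big)+\widetilde{\mathbb K}^{\mathrm R}_{k,j}=H_{\zeta,kj},$$ $$-\widetilde{\mathbb M}^{\mathrm R}_{k,j}\Theta_{j,2}+\big(\alpha\widetilde{\mathbb M}^{\mathrm R}_{k,j}+\beta\widetilde{\mathbb K}^{\mathrm R}_{k,j}\big)\Theta_{j,1}+\widetilde{\mathbb K}^{\mathrm R}_{k,j}=H_{\omega,kj}.$$
   Context: Single-input single-output second-order system: $M,D,K\in\mathbb{R}^{n\times n}$ with $M$ nonsingular, $B\in\mathbb{R}^{n\times1}$, $C\in\mathbb{R}^{1\times n}$, $G(s)=(s^2M+sD+K)^{-1}$ (wherever the inverse exists), and transfer function $H(s)=CG(s)B$. The superscript $\mathrm H$ denotes conjugate transpose. For an ordered list of real nodes $z_1,\dots,z_{N_p}$ with real weights $r_1,\dots,r_{N_p}$ and an ordered list of real nodes $w_1,\dots,w_{N_q}$ with real weights $f_1,\dots,f_{N_q}$, define $\widetilde U\in\mathbb{C}^{n\times N_p}$ with $j$-th column $r_jz_jG(iz_j)B$, $\widetilde L^{\mathrm H}\in\mathbb{C}^{N_q\times n}$ with $k$-th row $f_kCG(iw_k)$, and $\widetilde{\mathbb M}=\widetilde L^{\mathrm H}M\widetilde U$, $\widetilde{\mathbb K}=\widetilde L^{\mathrm H}K\widetilde U$,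 $\widetilde{\mathbb B}=\widetilde L^{\mathrm H}B$ (entries $f_kH(iw_k)$), $\widetilde{\mathbb C}=C\widetilde U$ (entries $r_jz_jH(iz_j)$). The unitary matrices are $$\mathcal F_1=\frac{1}{\sqrt2}\begin{bmatrix}1&-1\\ i&i\end{bmatrix},\qquad \mathcal F_2=\frac{1}{\sqrt2}\begin{bmatrix}1&1\\ i&-i\end{bmatrix}.$$ *)

theory Defs
  imports "HOL-Analysis.Analysis"
begin

definition cmat :: "real^'n^'m \<Rightarrow> complex^'n^'m" where
  "cmat A = (\<chi> i j. complex_of_real (A $ i $ j))"

definition cvec :: "real^'n \<Rightarrow> complex^'n" where
  "cvec v = (\<chi> i. complex_of_real (v $ i))"

definition ctrans :: "complex^'n^'m \<Rightarrow> complex^'m^'n" where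
  "ctrans A = (\<chi> i j. cnj (A $ j $ i))"

definition pencil :: "real^'n^'n \<Rightarrow> real^'n^'n \<Rightarrow> real^'n^'n \<Rightarrow> complex \<Rightarrow> complex^'n^'n" where
  "pencil M D K s = mat (s^2) ** cmat M + mat s ** cmat D + cmat K"

definition Gfun :: "real^'n^'n \<Rightarrow> real^'n^'n \<Rightarrow> real^'n^'n \<Rightarrow> complex \<Rightarrow> complex^'n^'n" where
  "Gfun M D K s = matrix_inv (pencil M D K s)"

text \<open>Transfer function H(s) = C G(s) B (C stored as a vector of its row entries).\<close>
definition tf :: "real^'n^'n \<Rightarrow> real^'n^'n \<Rightarrow> real^'n^'n \<Rightarrow> real^'n \<Rightarrow> real^'n \<Rightarrow> complex \<Rightarrow> complex" where
  "tf M D K B C s = (\<Sum>i\<in>UNIV. (cvec C) $ i * ((Gfun M D K s *v cvec B) $ i))"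

text \<open>Columns of U-tilde and rows of L-tilde^H, for node/weight lists indexed from 1
  (z j, r j for j = 1..N_p; w k, f k for k = 1..N_q).\<close>
definition Ucol :: "real^'n^'n \<Rightarrow> real^'n^'n \<Rightarrow> real^'n^'n \<Rightarrow> real^'n
   \<Rightarrow> (nat \<Rightarrow> real) \<Rightarrow> (nat \<Rightarrow> real) \<Rightarrow> nat \<Rightarrow> complex^'n" where
  "Ucol M D K B z r j = complex_of_real (r j * z j) *s (Gfun M D K (\<i> * complex_of_real (z j)) *v cvec B)"

definition Lrow :: "real^'n^'n \<Rightarrow> real^'n^'n \<Rightarrow> real^'n^'n \<Rightarrow> real^'n
   \<Rightarrow> (nat \<Rightarrow> real) \<Rightarrow> (nat \<Rightarrow> real) \<Rightarrow> nat \<Rightarrow> complex^'n" where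
  "Lrow M D K C w f k = complex_of_real (f k) *s (cvec C v* Gfun M D K (\<i> * complex_of_real (w k)))"

text \<open>Entries (k,j) of the reduced matrices (1-based row index k, column index j).\<close>
definition MMt where
  "MMt M D K B C z r w f k j =
     (\<Sum>i\<in>UNIV. (Lrow M D K C w f k) $ i * ((cmat M *v Ucol M D K B z r j) $ i))"

definition KKt where
  "KKt M D K B C z r w f k j =
     (\<Sum>i\<in>UNIV. (Lrow M D K C w f k) $ i * ((cmat K *v Ucol M D K B z r j) $ i))"

definition BBt where
  "BBt M D K B C w f k = (\<Sum>i\<in>UNIV. (Lrow M D K C w f k) $ i * (cvec B) $ i)"

definition CCt where
  "CCt M D K B C z r j = (\<Sum>i\<in>UNIV. (cvec C) $ i * (Ucol M D K B z r j) $ i)"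

definition interleave :: "(nat \<Rightarrow> real) \<Rightarrow> nat \<Rightarrow> real" where
  "interleave x m = (if odd m then x ((m + 1) div 2) else - x (m div 2))"

definition dupl :: "(nat \<Rightarrow> real) \<Rightarrow> nat \<Rightarrow> real" where
  "dupl y m = y ((m + 1) div 2)"

definition F1 :: "complex^2^2" where
  "F1 = (let c = complex_of_real (1 / sqrt 2) in vector [vector [c, - c], vector [\<i> * c, \<i> * c]])"

definition F2 :: "complex^2^2" where
  "F2 = (let c = complex_of_real (1 / sqrt 2) in vector [vector [c, c], vector [\<i> * c, - \<i> * c]])"

definition block2 :: "(nat \<Rightarrow> nat \<Rightarrow> complex) \<Rightarrow> nat \<Rightarrow> nat \<Rightarrow> complex^2^2" where
  "block2 A k j = vector [vector [A (2*k-1) (2*j-1), A (2*k-1) (2*j)],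
                          vector [A (2*k)   (2*j-1), A (2*k)   (2*j)]]"

definition seg2 :: "(nat \<Rightarrow> complex) \<Rightarrow> nat \<Rightarrow> complex^2" where
  "seg2 v k = vector [v (2*k-1), v (2*k)]"

definition is_real_mat :: "complex^2^2 \<Rightarrow> bool" where
  "is_real_mat A \<longleftrightarrow> (\<forall>a b. A $ a $ b \<in> \<real>)"

end

theory Submission
  imports Defs
begin


definition vcnj :: "complex^'n \<Rightarrow> complex^'n" where "vcnj v = (\<chi> i. cnj (v$i))"
definition mcnj :: "complex^'n^'m \<Rightarrow> complex^'n^'m" where "mcnj A = (\<chi> i j. cnj (A$i$j))"
definition bilc :: "complex^'n \<Rightarrow> complex^'n^'n \<Rightarrow> complex^'n \<Rightarrow> complex" where
  "bilc l X u = (\<Sum>i\<in>UNIV. l$i * (X *v u)$i)"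

lemma minv_props:
  fixes A :: "'a::semiring_1^'n^'m"
  assumes "invertible A"
  shows "A ** matrix_inv A = mat 1 \<and> matrix_inv A ** A = mat 1"
  using assms unfolding invertible_def matrix_inv_def by (rule someI_ex)

lemma minv_unique:
  fixes A :: "'a::semiring_1^'n^'n"
  assumes "A ** B = mat 1" "B ** A = mat 1"
  shows "matrix_inv A = B"
proof -
  have inv: "invertible A" using assms unfolding invertible_def by blast
  have "matrix_inv A = matrix_inv A ** (A ** B)" using assms by (simp add: matrix_mul_rid)
  also have "\<dots> = (matrix_inv A ** A) ** B" by (simp add: matrix_mul_assoc)
  also have "\<dots> = B" using minv_props[OF inv] by (simp add: matrix_mul_lid)
  finally show ?thesis .
qed

lemma mcnj_mult: "mcnj (A ** B) = mcnj A ** mcnj (B::complex^_^_)"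
  by (simp add: mcnj_def matrix_matrix_mult_def vec_eq_iff)

lemma mcnj_mat: "mcnj (mat c) = mat (cnj c)"
  by (simp add: mcnj_def mat_def vec_eq_iff)

lemma mcnj_add: "mcnj (A + B) = mcnj A + mcnj B"
  by (simp add: mcnj_def vec_eq_iff)

lemma mcnj_cmat: "mcnj (cmat A) = cmat A"
  by (simp add: mcnj_def cmat_def vec_eq_iff)

lemma vcnj_cvec: "vcnj (cvec A) = cvec A"
  by (simp add: vcnj_def cvec_def vec_eq_iff)

lemma mcnj_mv: "mcnj A *v vcnj v = vcnj (A *v v)"
  by (simp add: mcnj_def vcnj_def matrix_vector_mult_def vec_eq_iff)

lemma mcnj_vm: "vcnj v v* mcnj A = vcnj (v v* A)"
  by (simp add: mcnj_def vcnj_def vector_matrix_mult_def vec_eq_iff)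

lemma vcnj_scale: "vcnj (complex_of_real c *s v) = complex_of_real c *s vcnj v"
  by (simp add: vcnj_def vec_eq_iff)

lemma pencil_cnj: "pencil M D K (cnj s) = mcnj (pencil M D K s)"
  by (simp add: pencil_def mcnj_add mcnj_mult mcnj_mat mcnj_cmat)

lemma Gfun_cnj:
  assumes "invertible (pencil M D K s)"
  shows "Gfun M D K (cnj s) = mcnj (Gfun M D K s)"
proof -
  have "mcnj (pencil M D K s) ** mcnj (Gfun M D K s) = mat 1"
    "mcnj (Gfun M D K s) ** mcnj (pencil M D K s) = mat 1"
    using minv_props[OF assms] unfolding Gfun_def
    by (metis mcnj_mult mcnj_mat complex_cnj_one)+
  then show ?thesis unfolding Gfun_def pencil_cnj by (rule minv_unique)
qed

lemma swap_sum: "(\<Sum>i\<in>UNIV. (x v* A)$i * y$i) = (\<Sum>i\<in>UNIV. x$i * (A *v y)$i)"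
  for x y :: "'a::comm_semiring_1^'n"
proof -
  have "(\<Sum>i\<in>UNIV. (x v* A)$i * y$i) = (\<Sum>i\<in>UNIV. \<Sum>j\<in>UNIV. x$j * A$j$i * y$i)"
    by (simp add: vector_matrix_mult_def sum_distrib_right)
  also have "\<dots> = (\<Sum>j\<in>UNIV. \<Sum>i\<in>UNIV. x$j * A$j$i * y$i)"
    by (rule sum.swap)
  also have "\<dots> = (\<Sum>i\<in>UNIV. x$i * (A *v y)$i)"
    by (simp add: matrix_vector_mult_def sum_distrib_left mult.assoc)
  finally show ?thesis .
qed

lemma bilc_alt: "bilc l X u = (\<Sum>i\<in>UNIV. (l v* X)$i * u$i)"
  by (simp add: bilc_def swap_sum)

lemma bilc_add: "bilc l (X + Y) u = bilc l X u + bilc l Y u"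
  by (simp add: bilc_def matrix_vector_mult_def sum.distrib distrib_left distrib_right)

lemma if_mul_helper: "(if P then a else 0) * (x::'a::semiring_0) = (if P then a * x else 0)"
  by simp

lemma mat_mv: "mat s *v v = (\<chi> i. s * v$i)" for v :: "'a::comm_semiring_1^'n"
  by (simp add: mat_def matrix_vector_mult_def vec_eq_iff if_mul_helper)

lemma mat_mm: "(mat s ** X) = (\<chi> i j. s * X$i$j)" for X :: "'a::comm_semiring_1^'n^'m"
  by (simp add: mat_def matrix_matrix_mult_def vec_eq_iff if_mul_helper)

lemma bilc_mat: "bilc l (mat s ** X) u = s * bilc l X u"
  by (simp add: bilc_def matrix_vector_mul_assoc[symmetric] mat_mv sum_distrib_left mult.left_commute)

lemma cmat_damp: "cmat (a *\<^sub>R M + b *\<^sub>R K) = mat (complex_of_real a) ** cmat M + mat (complex_of_real b) ** cmat K"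
  by (simp add: cmat_def vec_eq_iff mat_mm)

lemma bilc_cnj: "bilc (vcnj l) (cmat A) (vcnj u) = cnj (bilc l (cmat A) u)"
  by (simp add: bilc_def vcnj_def cmat_def matrix_vector_mult_def)

lemma bilc_neg: "bilc l X (- u) = - bilc l X u"
  by (simp add: bilc_def matrix_vector_mult_def sum_negf)

lemma bilc_pencil: "bilc l (pencil M D K s) u =
   s^2 * bilc l (cmat M) u + s * bilc l (cmat D) u + bilc l (cmat K) u"
  by (simp add: pencil_def bilc_add bilc_mat)



definition mk :: "complex \<Rightarrow> complex \<Rightarrow> complex^2^2" where
  "mk p q = vector [vector [complex_of_real (Re (p+q)), complex_of_real (Im (p-q))],
                    vector [complex_of_real (- Im (p+q)), complex_of_real (Re (p-q))]]"

lemma s2: "sqrt 2 * sqrt 2 = (2::real)" by simp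

lemma F_block: "F2 ** vector [vector [p, -q], vector [cnj q, - cnj p]] ** ctrans F1 = mk p q"
  unfolding F1_def F2_def Let_def mk_def ctrans_def
  by (simp add: vec_eq_iff forall_2 sum_2 matrix_matrix_mult_def complex_eq_iff algebra_simps
       power2_eq_square)

lemma F_B: "F2 *v vector [complex_of_real c * h, complex_of_real c * cnj h] =
   (sqrt 2 * c) *\<^sub>R (vector [complex_of_real (Re h), complex_of_real (- Im h)] :: complex^2)"
  unfolding F2_def Let_def
  by (simp add: vec_eq_iff forall_2 sum_2 matrix_vector_mult_def complex_eq_iff algebra_simps
       field_simps)

lemma F_C: "vector [complex_of_real c * h, - (complex_of_real c * cnj h)] v* ctrans F1 =
   (sqrt 2 * c) *\<^sub>R (vector [complex_of_real (Re h), complex_of_real (Im h)] :: complex^2)"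
  unfolding F1_def Let_def ctrans_def
  by (simp add: vec_eq_iff forall_2 sum_2 vector_matrix_mult_def complex_eq_iff algebra_simps
       field_simps)


lemma vcnj_vcnj: "vcnj (vcnj v) = v" by (simp add: vcnj_def vec_eq_iff)

lemma sum_vcnj: "(\<Sum>i\<in>UNIV. (vcnj l)$i * (cvec B)$i) = cnj (\<Sum>i\<in>UNIV. l$i * (cvec B)$i)"
  by (simp add: vcnj_def cvec_def)

lemma sum_vcnj2: "(\<Sum>i\<in>UNIV. (cvec C)$i * (vcnj u)$i) = cnj (\<Sum>i\<in>UNIV. (cvec C)$i * u$i)"
  by (simp add: vcnj_def cvec_def)

lemma sum_scale: "(\<Sum>i\<in>UNIV. (c *s x)$i * y$i) = c * (\<Sum>i\<in>UNIV. x$i * y$i)" for x y :: "complex^'n"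
  by (simp add: sum_distrib_left mult.assoc)

lemma sum_scale2: "(\<Sum>i\<in>UNIV. x$i * (c *s y)$i) = c * (\<Sum>i\<in>UNIV. x$i * y$i)" for x y :: "complex^'n"
  by (simp add: sum_distrib_left mult.left_commute)

lemma sum_neg2: "(\<Sum>i\<in>UNIV. x$i * (- y)$i) = - (\<Sum>i\<in>UNIV. x$i * y$i)" for x y :: "complex^'n"
  by (simp add: sum_negf)

lemma interleave_odd: "1 \<le> k \<Longrightarrow> interleave x (2*k-1) = x k"
  by (simp add: interleave_def)

lemma interleave_even: "interleave x (2*k) = - x k"
  by (simp add: interleave_def)

lemma dupl_odd: "1 \<le> k \<Longrightarrow> dupl x (2*k-1) = x k"
  by (simp add: dupl_def)

lemma dupl_even: "dupl x (2*k) = x k"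
  by (simp add: dupl_def)

lemma i_neg: "\<i> * complex_of_real (- x) = cnj (\<i> * complex_of_real x)"
  by simp




lemma final_eqs:
  fixes pM qM pK qK Hz Hw :: complex and w z a b phi rho :: real
  assumes E1: "(\<i> * complex_of_real w)^2 * pM + (\<i> * complex_of_real w) * (complex_of_real a * pM + complex_of_real b * pK) + pK
      = complex_of_real phi * (complex_of_real (rho * z) * Hz)"
  and E2: "(\<i> * complex_of_real w)^2 * qM + (\<i> * complex_of_real w) * (complex_of_real a * qM + complex_of_real b * qK) + qK
      = complex_of_real phi * cnj (complex_of_real (rho * z) * Hz)"
  and E3: "(\<i> * complex_of_real z)^2 * pM + (\<i> * complex_of_real z) * (complex_of_real a * pM + complex_of_real b * pK) + pK
      = complex_of_real (rho * z) * (complex_of_real phi * Hw)"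
  and E4: "(cnj (\<i> * complex_of_real z))^2 * qM + cnj (\<i> * complex_of_real z) * (complex_of_real a * qM + complex_of_real b * qK) + qK
      = complex_of_real (rho * z) * (complex_of_real phi * Hw)"
  shows "- ((w ^ 2) *\<^sub>R (mat 1 :: complex^2^2) ** mk pM qM) + (vector [vector [0, complex_of_real w], vector [- complex_of_real w, 0]] :: complex^2^2) ** (a *\<^sub>R mk pM qM + b *\<^sub>R mk pK qK) + mk pK qK
     = (2 * phi * rho * z) *\<^sub>R
                (vector [vector [complex_of_real (Re Hz), complex_of_real (Im Hz)], vector [0, 0]] :: complex^2^2)"
    and "- (mk pM qM ** (z ^ 2) *\<^sub>R (mat 1 :: complex^2^2)) + (a *\<^sub>R mk pM qM + b *\<^sub>R mk pK qK) ** (vector [vector [0, complex_of_real z], vector [- complex_of_real z, 0]] :: complex^2^2) + mk pK qK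
     = (2 * phi * rho * z) *\<^sub>R
                (vector [vector [complex_of_real (Re Hw), 0], vector [complex_of_real (- Im Hw), 0]] :: complex^2^2)"
proof -
  have r1a: "- (w^2 * Re pM) - w * (a * Im pM + b * Im pK) + Re pK = phi * rho * z * Re Hz"
    using arg_cong[where f=Re, OF E1] by (simp add: power2_eq_square algebra_simps)
  have r1b: "- (w^2 * Im pM) + w * (a * Re pM + b * Re pK) + Im pK = phi * rho * z * Im Hz"
    using arg_cong[where f=Im, OF E1] by (simp add: power2_eq_square algebra_simps)
  note r1 = r1a r1b
  
  have r2a: "- (w^2 * Re qM) - w * (a * Im qM + b * Im qK) + Re qK = phi * rho * z * Re Hz"
    using arg_cong[where f=Re, OF E2] by (simp add: power2_eq_square algebra_simps)
  have r2b: "- (w^2 * Im qM) + w * (a * Re qM + b * Re qK) + Im qK = - (phi * rho * z * Im Hz)"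
    using arg_cong[where f=Im, OF E2] by (simp add: power2_eq_square algebra_simps)
  note r2 = r2a r2b
  
  have r3a: "- (z^2 * Re pM) - z * (a * Im pM + b * Im pK) + Re pK = phi * rho * z * Re Hw"
    using arg_cong[where f=Re, OF E3] by (simp add: power2_eq_square algebra_simps)
  have r3b: "- (z^2 * Im pM) + z * (a * Re pM + b * Re pK) + Im pK = phi * rho * z * Im Hw"
    using arg_cong[where f=Im, OF E3] by (simp add: power2_eq_square algebra_simps)
  note r3 = r3a r3b
  
  have r4a: "- (z^2 * Re qM) + z * (a * Im qM + b * Im qK) + Re qK = phi * rho * z * Re Hw"
    using arg_cong[where f=Re, OF E4] by (simp add: power2_eq_square algebra_simps)
  have r4b: "- (z^2 * Im qM) - z * (a * Re qM + b * Re qK) + Im qK = phi * rho * z * Im Hw"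
    using arg_cong[where f=Im, OF E4] by (simp add: power2_eq_square algebra_simps)
  note r4 = r4a r4b
  
  show "- ((w ^ 2) *\<^sub>R (mat 1 :: complex^2^2) ** mk pM qM) + (vector [vector [0, complex_of_real w], vector [- complex_of_real w, 0]] :: complex^2^2) ** (a *\<^sub>R mk pM qM + b *\<^sub>R mk pK qK) + mk pK qK
     = (2 * phi * rho * z) *\<^sub>R
                (vector [vector [complex_of_real (Re Hz), complex_of_real (Im Hz)], vector [0, 0]] :: complex^2^2)"
    using r1 r2
    by (simp add: vec_eq_iff forall_2 sum_2 matrix_matrix_mult_def mk_def mat_def complex_eq_iff algebra_simps)
  show "- (mk pM qM ** (z ^ 2) *\<^sub>R (mat 1 :: complex^2^2)) + (a *\<^sub>R mk pM qM + b *\<^sub>R mk pK qK) ** (vector [vector [0, complex_of_real z], vector [- complex_of_real z, 0]] :: complex^2^2) + mk pK qK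
     = (2 * phi * rho * z) *\<^sub>R
                (vector [vector [complex_of_real (Re Hw), 0], vector [complex_of_real (- Im Hw), 0]] :: complex^2^2)"
    using r3 r4
    by (simp add: vec_eq_iff forall_2 sum_2 matrix_matrix_mult_def mk_def mat_def complex_eq_iff algebra_simps)
qed


theorem mainTheorem3:
  fixes M D K :: "real^'n^'n" and B C :: "real^'n"
    and \<alpha> \<beta> :: real and \<nu>p \<nu>q :: nat
    and \<zeta> \<rho> \<omega> \<phi> :: "nat \<Rightarrow> real"
  assumes M_inv: "invertible M"
    and damp: "D = \<alpha> *\<^sub>R M + \<beta> *\<^sub>R K" and "\<alpha> \<ge> 0" and "\<beta> \<ge> 0"
    and "\<nu>p \<ge> 1" and "\<nu>q \<ge> 1"
    and zeta_pos: "\<And>j. 1 \<le> j \<Longrightarrow> j \<le> \<nu>p \<Longrightarrow> \<zeta> j > 0"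
    and omega_pos: "\<And>k. 1 \<le> k \<Longrightarrow> k \<le> \<nu>q \<Longrightarrow> \<omega> k > 0"
    and G_zeta: "\<And>j. 1 \<le> j \<Longrightarrow> j \<le> \<nu>p \<Longrightarrow>
         invertible (pencil M D K (\<i> * complex_of_real (\<zeta> j))) \<and>
         invertible (pencil M D K (- \<i> * complex_of_real (\<zeta> j)))"
    and G_omega: "\<And>k. 1 \<le> k \<Longrightarrow> k \<le> \<nu>q \<Longrightarrow>
         invertible (pencil M D K (\<i> * complex_of_real (\<omega> k))) \<and>
         invertible (pencil M D K (- \<i> * complex_of_real (\<omega> k)))"
    and k_rng: "1 \<le> k" "k \<le> \<nu>q"
    and j_rng: "1 \<le> j" "j \<le> \<nu>p"
  shows
    "let z = interleave \<zeta>; r = dupl \<rho>; w = interleave \<omega>; f = dupl \<phi>;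
         MR = F2 ** block2 (MMt M D K B C z r w f) k j ** ctrans F1;
         KR = F2 ** block2 (KKt M D K B C z r w f) k j ** ctrans F1;
         BR = F2 *v seg2 (BBt M D K B C w f) k;
         CR = seg2 (CCt M D K B C z r) j v* ctrans F1;
         Hz = tf M D K B C (\<i> * complex_of_real (\<zeta> j));
         Hw = tf M D K B C (\<i> * complex_of_real (\<omega> k));
         Om2 = (\<omega> k ^ 2) *\<^sub>R (mat 1 :: complex^2^2);
         Om1 = vector [vector [0, complex_of_real (\<omega> k)], vector [- complex_of_real (\<omega> k), 0]] :: complex^2^2;
         Th2 = (\<zeta> j ^ 2) *\<^sub>R (mat 1 :: complex^2^2);
         Th1 = vector [vector [0, complex_of_real (\<zeta> j)], vector [- complex_of_real (\<zeta> j), 0]] :: complex^2^2;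
         HZ = (2 * \<phi> k * \<rho> j * \<zeta> j) *\<^sub>R
                (vector [vector [complex_of_real (Re Hz), complex_of_real (Im Hz)], vector [0, 0]] :: complex^2^2);
         HW = (2 * \<phi> k * \<rho> j * \<zeta> j) *\<^sub>R
                (vector [vector [complex_of_real (Re Hw), 0], vector [complex_of_real (- Im Hw), 0]] :: complex^2^2)
     in is_real_mat MR \<and> is_real_mat KR
        \<and> BR = (sqrt 2 * \<phi> k) *\<^sub>R (vector [complex_of_real (Re Hw), complex_of_real (- Im Hw)] :: complex^2)
        \<and> CR = (sqrt 2 * \<rho> j * \<zeta> j) *\<^sub>R (vector [complex_of_real (Re Hz), complex_of_real (Im Hz)] :: complex^2)
        \<and> - (Om2 ** MR) + Om1 ** (\<alpha> *\<^sub>R MR + \<beta> *\<^sub>R KR) + KR = HZ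
        \<and> - (MR ** Th2) + (\<alpha> *\<^sub>R MR + \<beta> *\<^sub>R KR) ** Th1 + KR = HW"
  proof -
  define z where "z = interleave \<zeta>"
  define r where "r = dupl \<rho>"
  define w where "w = interleave \<omega>"
  define f where "f = dupl \<phi>"
  define sz where "sz = \<i> * complex_of_real (\<zeta> j)"
  define sw where "sw = \<i> * complex_of_real (\<omega> k)"
  define Gz where "Gz = Gfun M D K sz"
  define Gw where "Gw = Gfun M D K sw"
  define l where "l = Lrow M D K C w f (2*k-1)"
  define u where "u = Ucol M D K B z r (2*j-1)"
  define Hz where "Hz = tf M D K B C sz"
  define Hw where "Hw = tf M D K B C sw"
  have invz: "invertible (pencil M D K sz)" unfolding sz_def using G_zeta[OF j_rng] by (rule conjunct1)
  have invw: "invertible (pencil M D K sw)" unfolding sw_def using G_omega[OF k_rng] by (rule conjunct1)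
  have l_eq: "l = complex_of_real (\<phi> k) *s (cvec C v* Gw)"
    unfolding l_def Lrow_def w_def f_def interleave_odd[OF k_rng(1)] dupl_odd[OF k_rng(1)] Gw_def sw_def ..
  have u_eq: "u = complex_of_real (\<rho> j * \<zeta> j) *s (Gz *v cvec B)"
    unfolding u_def Ucol_def z_def r_def interleave_odd[OF j_rng(1)] dupl_odd[OF j_rng(1)] Gz_def sz_def
    by (simp add: mult.commute)
  have l2: "Lrow M D K C w f (2*k) = vcnj l"
  proof -
    have "Lrow M D K C w f (2*k) = complex_of_real (\<phi> k) *s (cvec C v* Gfun M D K (cnj sw))"
      by (simp add: Lrow_def w_def f_def interleave_even dupl_even sw_def)
    also have "\<dots> = complex_of_real (\<phi> k) *s (vcnj (cvec C) v* mcnj Gw)"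
      using Gfun_cnj[OF invw] by (simp add: Gw_def vcnj_cvec)
    also have "\<dots> = vcnj l" by (simp add: l_eq mcnj_vm vcnj_scale)
    finally show ?thesis .
  qed
  have u2: "Ucol M D K B z r (2*j) = - vcnj u"
  proof -
    have "Ucol M D K B z r (2*j) = complex_of_real (- (\<rho> j * \<zeta> j)) *s (Gfun M D K (cnj sz) *v cvec B)"
      by (simp add: Ucol_def z_def r_def interleave_even dupl_even sz_def)
    also have "\<dots> = complex_of_real (- (\<rho> j * \<zeta> j)) *s (mcnj Gz *v vcnj (cvec B))"
      using Gfun_cnj[OF invz] by (simp add: Gz_def vcnj_cvec)
    also have "\<dots> = - vcnj u" by (simp only: mcnj_mv) (simp add: u_eq vcnj_def vec_eq_iff)
    finally show ?thesis .
  qed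
  have MMt_b: "MMt M D K B C z r w f a b = bilc (Lrow M D K C w f a) (cmat M) (Ucol M D K B z r b)" for a b
    by (simp add: MMt_def bilc_def)
  have KKt_b: "KKt M D K B C z r w f a b = bilc (Lrow M D K C w f a) (cmat K) (Ucol M D K B z r b)" for a b
    by (simp add: KKt_def bilc_def)
  have cnjq: "bilc (vcnj l) (cmat A) u = cnj (bilc l (cmat A) (vcnj u))" for A :: "real^'n^'n"
    by (metis bilc_cnj vcnj_vcnj)
  define pM where "pM = bilc l (cmat M) u"
  define qM where "qM = bilc l (cmat M) (vcnj u)"
  define pK where "pK = bilc l (cmat K) u"
  define qK where "qK = bilc l (cmat K) (vcnj u)"
  have blkM: "block2 (MMt M D K B C z r w f) k j = vector [vector [pM, -qM], vector [cnj qM, - cnj pM]]"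
    unfolding block2_def MMt_b l_def[symmetric] u_def[symmetric] l2 u2
    by (simp add: pM_def qM_def bilc_neg bilc_cnj cnjq)
  have blkK: "block2 (KKt M D K B C z r w f) k j = vector [vector [pK, -qK], vector [cnj qK, - cnj pK]]"
    unfolding block2_def KKt_b l_def[symmetric] u_def[symmetric] l2 u2
    by (simp add: pK_def qK_def bilc_neg bilc_cnj cnjq)
  have MR: "F2 ** block2 (MMt M D K B C z r w f) k j ** ctrans F1 = mk pM qM"
    unfolding blkM by (rule F_block)
  have KR: "F2 ** block2 (KKt M D K B C z r w f) k j ** ctrans F1 = mk pK qK"
    unfolding blkK by (rule F_block)
  have lB: "(\<Sum>i\<in>UNIV. l$i * (cvec B)$i) = complex_of_real (\<phi> k) * Hw"
    unfolding l_eq sum_scale swap_sum Hw_def tf_def Gw_def ..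
  have Cu: "(\<Sum>i\<in>UNIV. (cvec C)$i * u$i) = complex_of_real (\<rho> j * \<zeta> j) * Hz"
    unfolding u_eq sum_scale2 Hz_def tf_def Gz_def ..
  have BB1: "BBt M D K B C w f (2*k-1) = complex_of_real (\<phi> k) * Hw"
    using lB by (simp add: BBt_def l_def)
  have BB2: "BBt M D K B C w f (2*k) = complex_of_real (\<phi> k) * cnj Hw"
    using lB by (simp add: BBt_def l2 sum_vcnj)
  have CC1: "CCt M D K B C z r (2*j-1) = complex_of_real (\<rho> j * \<zeta> j) * Hz"
    using Cu by (simp add: CCt_def u_def)
  have CC2: "CCt M D K B C z r (2*j) = - (complex_of_real (\<rho> j * \<zeta> j) * cnj Hz)"
    unfolding CCt_def u2 sum_neg2 sum_vcnj2 Cu by simp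
  have BR: "F2 *v seg2 (BBt M D K B C w f) k = (sqrt 2 * \<phi> k) *\<^sub>R (vector [complex_of_real (Re Hw), complex_of_real (- Im Hw)] :: complex^2)"
    unfolding seg2_def BB1 BB2 by (rule F_B)
  have CR: "seg2 (CCt M D K B C z r) j v* ctrans F1 = (sqrt 2 * \<rho> j * \<zeta> j) *\<^sub>R (vector [complex_of_real (Re Hz), complex_of_real (Im Hz)] :: complex^2)"
    unfolding seg2_def CC1 CC2 using F_C[of "\<rho> j * \<zeta> j" Hz] by (simp add: mult.assoc)
  have lP: "l v* pencil M D K sw = complex_of_real (\<phi> k) *s cvec C"
    using minv_props[OF invw]
    by (simp add: l_eq scalar_vector_matrix_assoc vector_matrix_mul_assoc Gw_def Gfun_def vector_matrix_mul_rid)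
  have Pu: "pencil M D K sz *v u = complex_of_real (\<rho> j * \<zeta> j) *s cvec B"
    using minv_props[OF invz]
    by (simp add: u_eq vector_scalar_commute matrix_vector_mul_assoc Gz_def Gfun_def matrix_vector_mul_lid)
  have E1: "bilc l (pencil M D K sw) u = complex_of_real (\<phi> k) * (complex_of_real (\<rho> j * \<zeta> j) * Hz)"
    unfolding bilc_alt lP sum_scale Cu ..
  have E2: "bilc l (pencil M D K sw) (vcnj u) = complex_of_real (\<phi> k) * cnj (complex_of_real (\<rho> j * \<zeta> j) * Hz)"
    unfolding bilc_alt lP sum_scale sum_vcnj2 Cu ..
  have E3: "bilc l (pencil M D K sz) u = complex_of_real (\<rho> j * \<zeta> j) * (complex_of_real (\<phi> k) * Hw)"
    unfolding bilc_def Pu sum_scale2 lB ..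
  have E4: "bilc l (pencil M D K (cnj sz)) (vcnj u) = complex_of_real (\<rho> j * \<zeta> j) * (complex_of_real (\<phi> k) * Hw)"
    unfolding bilc_def pencil_cnj mcnj_mv Pu vcnj_scale vcnj_cvec sum_scale2 lB ..
  have bD: "bilc l' (cmat D) v = complex_of_real \<alpha> * bilc l' (cmat M) v + complex_of_real \<beta> * bilc l' (cmat K) v" for l' v
    unfolding damp cmat_damp bilc_add bilc_mat ..
  note Es = E1 E2 E3 E4
  note Es' = Es[unfolded bilc_pencil bD pM_def[symmetric] qM_def[symmetric] pK_def[symmetric] qK_def[symmetric]]
  have realmk: "is_real_mat (mk p q)" for p q
    by (simp add: is_real_mat_def mk_def forall_2)
  note F = final_eqs[OF Es'[unfolded sw_def sz_def]]
  show ?thesis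
    unfolding Let_def z_def[symmetric] r_def[symmetric] w_def[symmetric] f_def[symmetric]
      sz_def[symmetric] sw_def[symmetric] Hz_def[symmetric] Hw_def[symmetric] MR KR BR CR
    apply (intro conjI realmk refl)
     apply (rule F(1))
    apply (rule F(2))
    done
qed

end
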